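(* Let $S\ge0$ be an integer and let $\mathbf a=(a_1,\dots,a_m)$ be a partition. Then there exists a partition $\mathbf g=(g_1,\dots,g_{m+1})$ such that $\sum_{i=1}^{m+1}g_i=S$ and $\mathbf g\prec'\mathbf a$.
   Context: A partition is a nonincreasing finite sequence of nonnegative integers. 1-step generalized majorization: for nonincreasing integer sequences $\mathbf g=(g_1,\dots,g_{m+1})$ and $\mathbf a=(a_1,\dots,a_m)$, set $a_{m+1}=-\infty$ and $h=\min\{i: a_i<g_i\}$; then $\mathbf g\prec'\mathbf a$ means $a_i=g_{i+1}$ for all $h\le i\le m$. *)

theory Defs
  imports Main
begin

text \<open>A partition: a nonincreasing finite sequence of nonnegative integers,
  represented as a list of naturals (entry i of the list is the (i+1)-th part).\<close>
definition is_partition :: "nat list \<Rightarrow> bool" where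
  "is_partition xs \<longleftrightarrow> sorted_wrt (\<ge>) xs"

text \<open>With a at position m equal to minus infinity, the index
  h is the least i with i = m or a!i < g!i; the condition says a!i = g!(i+1)
  for all h \<le> i < m.\<close>
definition gen_maj1 :: "int list \<Rightarrow> int list \<Rightarrow> bool" where
  "gen_maj1 g a \<longleftrightarrow>
     length g = length a + 1 \<and> sorted_wrt (\<ge>) g \<and> sorted_wrt (\<ge>) a \<and>
     (let h = (LEAST i. i = length a \<or> (i < length a \<and> a ! i < g ! i))
      in \<forall>i. h \<le> i \<and> i < length a \<longrightarrow> a ! i = g ! (i + 1))"

end

theory Submission
  imports Defs
begin

lemma sorted_map_int: "sorted_wrt (\<ge>) (map int xs) = sorted_wrt (\<ge>) xs"
  by (simp add: sorted_wrt_map)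

lemma key:
  fixes g a :: "nat list"
  assumes "length g = length a + 1" "sorted_wrt (\<ge>) g" "sorted_wrt (\<ge>) a"
    "k \<le> length a" "\<forall>i<k. g!i \<le> a!i"
    "\<forall>i. k \<le> i \<and> i < length a \<longrightarrow> a!i = g!(i+1)"
  shows "gen_maj1 (map int g) (map int a)"
proof -
  define P where "P = (\<lambda>i. i = length (map int a) \<or> (i < length (map int a) \<and> map int a ! i < map int g ! i))"
  have "P (length a)" unfolding P_def by simp
  hence hP: "P (Least P)" by (rule LeastI)
  have "k \<le> Least P"
  proof (rule ccontr)
    assume "\<not> k \<le> Least P"
    hence lk: "Least P < k" by simp
    hence ll: "Least P < length a" using assms(4) by simp
    have "g ! (Least P) \<le> a ! (Least P)" using assms(5) lk by blast
    moreover have "int (a ! Least P) < int (g ! Least P)"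
      using hP ll assms(1) unfolding P_def by simp
    ultimately show False by simp
  qed
  have c: "\<forall>i. Least P \<le> i \<and> i < length (map int a) \<longrightarrow> map int a ! i = map int g ! (i + 1)"
  proof (intro allI impI)
    fix i assume i: "Least P \<le> i \<and> i < length (map int a)"
    hence "a ! i = g ! (i+1)" using assms(6) \<open>k \<le> Least P\<close> by simp
    thus "map int a ! i = map int g ! (i + 1)" using i assms(1) by simp
  qed
  show ?thesis unfolding gen_maj1_def Let_def P_def[symmetric]
    using c assms(1,2,3) by (simp add: sorted_map_int)
qed

fun trunc :: "nat \<Rightarrow> nat list \<Rightarrow> nat list" where
  "trunc s [] = []"
| "trunc s (x#xs) = min s x # trunc (s - min s x) xs"

lemma trunc_len: "length (trunc s xs) = length xs"
  by (induction s xs rule: trunc.induct) auto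

lemma trunc_sum: "sum_list (trunc s xs) = min s (sum_list xs)"
proof (induction s xs rule: trunc.induct)
  case (1 s) then show ?case by simp
next
  case (2 s x xs)
  have e: "min s x + min (s - min s x) (sum_list xs) = min s (x + sum_list xs)"
    by (cases "s \<le> x") (auto simp only: min_def split: if_splits)
  show ?case using 2 e by (simp only: trunc.simps sum_list.Cons)
qed

lemma trunc_le: "i < length xs \<Longrightarrow> trunc s xs ! i \<le> xs ! i"
  by (induction s xs arbitrary: i rule: trunc.induct) (auto simp: nth_Cons split: nat.splits)

lemma trunc_hd: "\<forall>y \<in> set (trunc s xs). y \<le> s"
  by (induction s xs rule: trunc.induct) auto

lemma trunc_sorted: "sorted_wrt (\<ge>) xs \<Longrightarrow> sorted_wrt (\<ge>) (trunc s xs)"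
proof (induction s xs rule: trunc.induct)
  case (1 s) then show ?case by simp
next
  case (2 s x xs)
  have "\<forall>y \<in> set (trunc (s - min s x) xs). y \<le> min s x"
  proof
    fix y assume y: "y \<in> set (trunc (s - min s x) xs)"
    show "y \<le> min s x"
    proof (cases "s \<le> x")
      case True
      have "y \<le> s - min s x" using y trunc_hd[of "s - min s x" xs] by blast
      then show ?thesis using True by simp
    next
      case False
      from y obtain j where j0: "j < length (trunc (s - min s x) xs)" "trunc (s - min s x) xs ! j = y"
        unfolding in_set_conv_nth by blast
      have j: "j < length xs" using j0(1) by (simp only: trunc_len)
      have "y \<le> xs ! j" using trunc_le[OF j, of "s - min s x"] j0(2) by simp
      also have "xs ! j \<le> x" using 2(2) nth_mem[OF j(1)] by simp
      finally show ?thesis using False by simp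
    qed
  qed
  moreover have "sorted_wrt (\<ge>) (trunc (s - min s x) xs)" using 2 by simp
  ultimately show ?case unfolding trunc.simps sorted_wrt.simps(2) by blast
qed

theorem lemma5p1:
  fixes S :: nat and a :: "nat list"
  assumes "is_partition a"
  shows "\<exists>g. is_partition g \<and> length g = length a + 1 \<and> sum_list g = S \<and>
             gen_maj1 (map int g) (map int a)"
proof (cases "S \<le> sum_list a")
  case True
  define g where "g = trunc S a @ [0]"
  have s: "sorted_wrt (\<ge>) a" using assms by (simp add: is_partition_def)
  have gs: "sorted_wrt (\<ge>) g" unfolding g_def using trunc_sorted[OF s]
    by (simp add: sorted_wrt_append)
  have gl: "length g = length a + 1" by (simp add: g_def trunc_len)
  have "sum_list g = S" using True by (simp add: g_def trunc_sum)
  moreover have "gen_maj1 (map int g) (map int a)"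
    apply (rule key[OF gl gs s order_refl])
    using trunc_le by (auto simp: g_def nth_append trunc_len)
  ultimately show ?thesis using gl gs by (auto simp: is_partition_def)
next
  case False
  define y where "y = S - sum_list a"
  define t where "t = takeWhile (\<lambda>x. y \<le> x) a"
  define d where "d = dropWhile (\<lambda>x. y \<le> x) a"
  define g where "g = t @ y # d"
  have s: "sorted_wrt (\<ge>) a" using assms by (simp add: is_partition_def)
  have ad: "a = t @ d" by (simp add: t_def d_def)
  have st: "sorted_wrt (\<ge>) t" "sorted_wrt (\<ge>) d" "\<forall>u\<in>set t. \<forall>v\<in>set d. v \<le> u"
  proof -
    have "sorted_wrt (\<ge>) (t @ d)" using s ad by simp
    thus "sorted_wrt (\<ge>) t" "sorted_wrt (\<ge>) d" "\<forall>u\<in>set t. \<forall>v\<in>set d. v \<le> u"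
      unfolding sorted_wrt_append by blast+
  qed
  have ty: "\<forall>u\<in>set t. y \<le> u" unfolding t_def by (auto dest: set_takeWhileD)
  have dy: "\<forall>v\<in>set d. v \<le> y"
  proof (cases d)
    case Nil then show ?thesis by simp
  next
    case (Cons z zs)
    have "\<not> y \<le> z" using Cons unfolding d_def by (metis hd_dropWhile list.distinct(1) list.sel(1))
    then show ?thesis using st(2) Cons by auto
  qed
  have gs: "sorted_wrt (\<ge>) g" unfolding g_def using st ty dy
    by (auto simp: sorted_wrt_append)
  have gl: "length g = length a + 1" by (simp add: g_def ad)
  have "sum_list g = S" using False by (simp add: g_def ad y_def)
  moreover have "gen_maj1 (map int g) (map int a)"
  proof (rule key[OF gl gs s, of "length t"])
    show "length t \<le> length a" using ad by simp
    show "\<forall>i<length t. g ! i \<le> a ! i" unfolding g_def ad by (simp add: nth_append)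
    show "\<forall>i. length t \<le> i \<and> i < length a \<longrightarrow> a ! i = g ! (i + 1)"
    proof (intro allI impI)
      fix i assume i: "length t \<le> i \<and> i < length a"
      then obtain j where j: "i = length t + j" by (metis le_add_diff_inverse)
      show "a ! i = g ! (i + 1)" unfolding g_def ad j
        by (simp add: nth_append)
    qed
  qed
  ultimately show ?thesis using gl gs by (auto simp: is_partition_def)
qed

end
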